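(* Let $\mathcal{X}=\{1,\ldots,n\}$, let $p=(p(1),\ldots,p(n))$ be a probability vector with $p(1)\geq\cdots\geq p(n)>0$ (the prior of $X$), and let $k<n$ be a positive integer. Let $j^*:=\min\{j:1\leq j\leq k,\ p(j)\leq \sum_{i=j}^n p(i)/(k-j+1)\}$ and $\pi=(\pi_1,\ldots,\pi_k)$ with $\pi_l=p(l)$ for $l\leq j^*-1$ and $\pi_l=\sum_{i=j^*}^n p(i)/(k-j^*+1)$ for $j^*\leq l\leq k$. Let $\mathcal{M}^*$ be the family of all $M\subseteq\mathcal{X}$ with $|M|=k$ and $\{1,\ldots,j^*-1\}\subseteq M$. Then the system $\sum_{M\in\mathcal{M}^*:\,i\in M}v_M=p(i)$ for $i=j^*,\ldots,n$, $v_M\geq0$ for $M\in\mathcal{M}^*$, has a solution, and for any solution $v$ the channel with outputs $\{y_M:M\in\mathcal{M}^*\}$ given by $p(y_M\mid i)=v_M/p(i)$ for $i\in\{j^*,\ldots,n\}\cap M$, $p(y_M\mid i)=v_M(k-j^*+1)/\sum_{j=j^*}^np(j)$ for $i\in\{1,\ldots,j^*-1\}$, and $p(y_M\mid i)=0$ otherwise, is a feasible channel satisfying $H(X\mid Y)=H(\pi)$ for every generalised entropy $(\eta,F)$.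
   Context: Generalised entropy: a pair $(\eta,F)$ where $F$ is a bounded real-valued function on probability vectors of every finite length that is symmetric (unchanged by permuting entries) and expansible (unchanged by appending zero entries), and $\eta$ is a real function, such that either $\eta$ is increasing and $F$ concave, or $\eta$ is decreasing and $F$ convex. $H(q)=\eta(F(q))$ and $H(X\mid Y)=\eta\big(\sum_{y:\,p(y)>0}p(y)F(p_{X\mid y})\big)$ with $p_{X\mid y}=(p(x\mid y))_{x\in\mathcal{X}}$. A channel is a discrete output set $\mathcal{Y}$ with conditional probabilities $p(y\mid x)\geq0$, $\sum_y p(y\mid x)=1$; $Y$ is its output when the input is $X\sim p$, with $p(y)=\sum_x p(x)p(y\mid x)$ and $p(x\mid y)=p(x)p(y\mid x)/p(y)$. The pre-image of $y$ is $\{x:p(y\mid x)>0\}$; the channel is feasible if every pre-image has at most $k$ elements. *)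

theory Defs
  imports Complex_Main "HOL-Library.Multiset"
begin

definition prob_vec :: "real list \<Rightarrow> bool" where
  "prob_vec q \<longleftrightarrow> (\<forall>x\<in>set q. 0 \<le> x) \<and> sum_list q = 1"

definition F_bounded :: "(real list \<Rightarrow> real) \<Rightarrow> bool" where
  "F_bounded F \<longleftrightarrow> (\<exists>B. \<forall>q. prob_vec q \<longrightarrow> \<bar>F q\<bar> \<le> B)"

definition F_symmetric :: "(real list \<Rightarrow> real) \<Rightarrow> bool" where
  "F_symmetric F \<longleftrightarrow> (\<forall>q q'. prob_vec q \<longrightarrow> mset q' = mset q \<longrightarrow> F q' = F q)"

definition F_expansible :: "(real list \<Rightarrow> real) \<Rightarrow> bool" where
  "F_expansible F \<longleftrightarrow> (\<forall>q. prob_vec q \<longrightarrow> F (q @ [0]) = F q)"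

definition F_concave :: "(real list \<Rightarrow> real) \<Rightarrow> bool" where
  "F_concave F \<longleftrightarrow> (\<forall>q r t. prob_vec q \<longrightarrow> prob_vec r \<longrightarrow> length q = length r \<longrightarrow>
      0 \<le> t \<longrightarrow> t \<le> 1 \<longrightarrow>
      t * F q + (1 - t) * F r \<le> F (map2 (\<lambda>a b. t * a + (1 - t) * b) q r))"

definition F_convex :: "(real list \<Rightarrow> real) \<Rightarrow> bool" where
  "F_convex F \<longleftrightarrow> (\<forall>q r t. prob_vec q \<longrightarrow> prob_vec r \<longrightarrow> length q = length r \<longrightarrow>
      0 \<le> t \<longrightarrow> t \<le> 1 \<longrightarrow>
      F (map2 (\<lambda>a b. t * a + (1 - t) * b) q r) \<le> t * F q + (1 - t) * F r)"

definition gen_entropy :: "(real \<Rightarrow> real) \<Rightarrow> (real list \<Rightarrow> real) \<Rightarrow> bool" where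
  "gen_entropy \<eta> F \<longleftrightarrow> F_bounded F \<and> F_symmetric F \<and> F_expansible F \<and>
     ((mono \<eta> \<and> F_concave F) \<or> (antimono \<eta> \<and> F_convex F))"

definition entropy :: "(real \<Rightarrow> real) \<Rightarrow> (real list \<Rightarrow> real) \<Rightarrow> real list \<Rightarrow> real" where
  "entropy \<eta> F q = \<eta> (F q)"

text \<open>A channel with input set {1..n}, output set Y and transition probabilities W x y = p(y|x).\<close>
definition is_channel :: "nat \<Rightarrow> 'b set \<Rightarrow> (nat \<Rightarrow> 'b \<Rightarrow> real) \<Rightarrow> bool" where
  "is_channel n Y W \<longleftrightarrow> (\<forall>x\<in>{1..n}. (\<forall>y\<in>Y. 0 \<le> W x y) \<and> (\<Sum>y\<in>Y. W x y) = 1)"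

definition feasible :: "nat \<Rightarrow> nat \<Rightarrow> 'b set \<Rightarrow> (nat \<Rightarrow> 'b \<Rightarrow> real) \<Rightarrow> bool" where
  "feasible k n Y W \<longleftrightarrow> (\<forall>y\<in>Y. card {x\<in>{1..n}. W x y > 0} \<le> k)"

definition out_prob :: "nat \<Rightarrow> (nat \<Rightarrow> real) \<Rightarrow> (nat \<Rightarrow> 'b \<Rightarrow> real) \<Rightarrow> 'b \<Rightarrow> real" where
  "out_prob n p W y = (\<Sum>x\<in>{1..n}. p x * W x y)"

definition posterior :: "nat \<Rightarrow> (nat \<Rightarrow> real) \<Rightarrow> (nat \<Rightarrow> 'b \<Rightarrow> real) \<Rightarrow> 'b \<Rightarrow> real list" where
  "posterior n p W y = map (\<lambda>x. p x * W x y / out_prob n p W y) [1..<Suc n]"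

definition cond_entropy ::
  "(real \<Rightarrow> real) \<Rightarrow> (real list \<Rightarrow> real) \<Rightarrow> nat \<Rightarrow> (nat \<Rightarrow> real) \<Rightarrow> 'b set \<Rightarrow> (nat \<Rightarrow> 'b \<Rightarrow> real) \<Rightarrow> real" where
  "cond_entropy \<eta> F n p Y W =
     \<eta> (\<Sum>y\<in>{y\<in>Y. out_prob n p W y > 0}. out_prob n p W y * F (posterior n p W y))"

definition jstar :: "nat \<Rightarrow> nat \<Rightarrow> (nat \<Rightarrow> real) \<Rightarrow> nat" where
  "jstar k n p = (LEAST j. 1 \<le> j \<and> j \<le> k \<and> p j \<le> (\<Sum>i=j..n. p i) / real (k - j + 1))"

definition pivec :: "nat \<Rightarrow> nat \<Rightarrow> (nat \<Rightarrow> real) \<Rightarrow> real list" where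
  "pivec k n p = map (\<lambda>l. if l \<le> jstar k n p - 1 then p l
        else (\<Sum>i=jstar k n p..n. p i) / real (k - jstar k n p + 1)) [1..<Suc k]"

definition Mstar :: "nat \<Rightarrow> nat \<Rightarrow> (nat \<Rightarrow> real) \<Rightarrow> nat set set" where
  "Mstar k n p = {M. M \<subseteq> {1..n} \<and> card M = k \<and> {1..jstar k n p - 1} \<subseteq> M}"

definition is_solution :: "nat \<Rightarrow> nat \<Rightarrow> (nat \<Rightarrow> real) \<Rightarrow> (nat set \<Rightarrow> real) \<Rightarrow> bool" where
  "is_solution k n p v \<longleftrightarrow>
     (\<forall>i\<in>{jstar k n p..n}. (\<Sum>M\<in>{M\<in>Mstar k n p. i \<in> M}. v M) = p i) \<and>
     (\<forall>M\<in>Mstar k n p. 0 \<le> v M)"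

text \<open>The channel: output y_M is represented by the set M itself.\<close>
definition chan :: "nat \<Rightarrow> nat \<Rightarrow> (nat \<Rightarrow> real) \<Rightarrow> (nat set \<Rightarrow> real) \<Rightarrow> nat \<Rightarrow> nat set \<Rightarrow> real" where
  "chan k n p v i M =
     (if i \<in> {jstar k n p..n} \<inter> M then v M / p i
      else if i \<in> {1..jstar k n p - 1} then
        v M * real (k - jstar k n p + 1) / (\<Sum>j=jstar k n p..n. p j)
      else 0)"

end

theory Submission
  imports Defs
begin

lemma hyper:
  fixes N B :: "nat set" and m :: nat
  assumes fin: "finite N" "finite B" and disj: "B \<inter> N = {}" and m0: "0 < m"
  shows "0 \<le> h \<Longrightarrow> (\<forall>i\<in>N. 0 \<le> q i \<and> q i \<le> h) \<Longrightarrow> sum q N = real m * h \<Longrightarrow>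
    \<exists>v. (\<forall>M. 0 \<le> v M) \<and> (\<forall>i\<in>N. sum v {M. M \<subseteq> B \<union> N \<and> card M = card B + m \<and> B \<subseteq> M \<and> i \<in> M} = q i)"
proof (induction "card {i\<in>N. 0 < q i} + card {i\<in>N. q i < h}" arbitrary: q h rule: less_induct)
  case (less q h)
  define Fam where "Fam = {M. M \<subseteq> B \<union> N \<and> card M = card B + m \<and> B \<subseteq> M}"
  have finFam: "finite Fam" unfolding Fam_def
    by (rule finite_subset[of _ "Pow (B \<union> N)"]) (use fin in auto)
  have famx: "{M. M \<subseteq> B \<union> N \<and> card M = card B + m \<and> B \<subseteq> M \<and> i \<in> M} = {M\<in>Fam. i \<in> M}" for i
    unfolding Fam_def by auto
  show ?case
  proof (cases "h = 0")
    case True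
    then have "\<forall>i\<in>N. q i = 0" using less.prems by force
    then show ?thesis by (intro exI[of _ "\<lambda>_. 0"]) auto
  next
    case False
    then have hpos: "h > 0" using less.prems by auto
    define T where "T = {i\<in>N. q i = h}"
    define P where "P = {i\<in>N. 0 < q i}"
    have TP: "T \<subseteq> P" unfolding T_def P_def using hpos by auto
    have finT: "finite T" "finite P" unfolding T_def P_def using fin by auto
    have "real (card T) * h = sum q T" unfolding T_def by simp
    also have "\<dots> \<le> sum q N" by (rule sum_mono2) (use fin less.prems in \<open>auto simp: T_def\<close>)
    finally have "card T \<le> m" using less.prems(3) hpos by (simp add: mult_le_cancel_right)
    have "sum q N = sum q P" unfolding P_def
      by (rule sum.mono_neutral_right) (use fin less.prems in force)+
    also have "\<dots> \<le> real (card P) * h"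
      using sum_mono[of P q "\<lambda>_. h"] less.prems unfolding P_def by auto
    finally have "m \<le> card P" using less.prems(3) hpos by (simp add: mult_le_cancel_right)
    then have "m - card T \<le> card (P - T)" using TP finT by (simp add: card_Diff_subset)
    then obtain A0 where A0: "A0 \<subseteq> P - T" "card A0 = m - card T"
      using obtain_subset_with_card_n by metis
    define A where "A = T \<union> A0"
    have AP: "T \<subseteq> A" "A \<subseteq> P" using A0 TP unfolding A_def by auto
    have finA: "finite A" using AP finT finite_subset by blast
    have cardA: "card A = m" unfolding A_def using A0 finT \<open>card T \<le> m\<close>
      by (subst card_Un_disjoint) (auto intro: finite_subset)
    have AN: "A \<subseteq> N" using AP unfolding P_def by auto
    have Ane: "A \<noteq> {}" using cardA m0 by auto
    define L where "L = q ` A \<union> (\<lambda>i. h - q i) ` (N - A)"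
    define lam where "lam = Min L"
    have finL: "finite L" unfolding L_def using finA fin by auto
    have Lne: "L \<noteq> {}" unfolding L_def using Ane by auto
    have lamle: "lam \<le> q i" if "i \<in> A" for i unfolding lam_def using finL that by (auto simp: L_def)
    have lamle2: "lam \<le> h - q i" if "i \<in> N - A" for i unfolding lam_def using finL that by (auto simp: L_def)
    have laminL: "lam \<in> L" unfolding lam_def using finL Lne by simp
    have Lpos: "\<forall>x\<in>L. 0 < x"
    proof
      fix x assume "x \<in> L"
      then show "0 < x" unfolding L_def
      proof
        assume "x \<in> q ` A" then show ?thesis using AP unfolding P_def by auto
      next
        assume "x \<in> (\<lambda>i. h - q i) ` (N - A)"
        then obtain i where i: "i \<in> N - A" "x = h - q i" by auto
        then have "q i \<noteq> h" using AP unfolding T_def by auto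
        then show ?thesis using i less.prems by force
      qed
    qed
    have lampos: "0 < lam" using Lpos laminL by auto
    obtain a where "a \<in> A" using Ane by auto
    have lamh: "lam \<le> h" using lamle[OF \<open>a \<in> A\<close>] less.prems \<open>a \<in> A\<close> AN by force
    define q' where "q' = (\<lambda>i. if i \<in> A then q i - lam else q i)"
    define h' where "h' = h - lam"
    have prems': "0 \<le> h'" "\<forall>i\<in>N. 0 \<le> q' i \<and> q' i \<le> h'"
      using lamh lamle lamle2 less.prems unfolding q'_def h'_def by (auto, force+)
    have "sum q' N = sum q N - sum (\<lambda>i. if i \<in> A then lam else 0) N"
      unfolding q'_def by (simp add: sum_subtractf[symmetric]) (rule sum.cong, auto)
    also have "sum (\<lambda>i. if i \<in> A then lam else 0) N = real m * lam"
      using AN fin cardA by (simp add: sum.If_cases Int_absorb1)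
    finally have sum': "sum q' N = real m * h'" using less.prems(3) unfolding h'_def by (simp add: algebra_simps)
    have ex': "\<exists>v. (\<forall>M. 0 \<le> v M) \<and> (\<forall>i\<in>N. sum v {M. M \<subseteq> B \<union> N \<and> card M = card B + m \<and> B \<subseteq> M \<and> i \<in> M} = q' i)"
    proof (cases "lam = h")
      case True
      have "\<forall>i\<in>N. q' i = 0"
      proof
        fix i assume "i \<in> N"
        show "q' i = 0"
        proof (cases "i \<in> A")
          case True then show ?thesis using lamle[OF True] less.prems \<open>i\<in>N\<close> \<open>lam = h\<close> unfolding q'_def by force
        next
          case False then show ?thesis using lamle2[of i] less.prems \<open>i\<in>N\<close> \<open>lam = h\<close> unfolding q'_def by force
        qed
      qed
      then show ?thesis by (intro exI[of _ "\<lambda>_. 0"]) auto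
    next
      case False
      have s1: "{i\<in>N. 0 < q' i} \<subseteq> {i\<in>N. 0 < q i}" unfolding q'_def using lampos by auto
      have s2: "{i\<in>N. q' i < h'} \<subseteq> {i\<in>N. q i < h}" unfolding q'_def h'_def using lampos by auto
      have fs: "finite {i\<in>N. 0 < q i}" "finite {i\<in>N. q i < h}" using fin by auto
      have "card {i\<in>N. 0 < q' i} < card {i\<in>N. 0 < q i} \<or> card {i\<in>N. q' i < h'} < card {i\<in>N. q i < h}"
      proof -
        from laminL consider (a) i where "i \<in> A" "q i = lam" | (b) i where "i \<in> N - A" "h - q i = lam"
          unfolding L_def by auto
        then show ?thesis
        proof cases
          case a
          then have "i \<in> {i\<in>N. 0 < q i}" "i \<notin> {i\<in>N. 0 < q' i}" using AN lampos unfolding q'_def by auto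
          then have "card {i\<in>N. 0 < q' i} < card {i\<in>N. 0 < q i}"
            using s1 fs by (intro psubset_card_mono) auto
          then show ?thesis by simp
        next
          case b
          then have "i \<in> {i\<in>N. q i < h}" "i \<notin> {i\<in>N. q' i < h'}" using lampos unfolding q'_def h'_def by auto
          then have "card {i\<in>N. q' i < h'} < card {i\<in>N. q i < h}"
            using s2 fs by (intro psubset_card_mono) auto
          then show ?thesis by simp
        qed
      qed
      moreover have "card {i\<in>N. 0 < q' i} \<le> card {i\<in>N. 0 < q i}" "card {i\<in>N. q' i < h'} \<le> card {i\<in>N. q i < h}"
        using s1 s2 fs by (auto intro: card_mono)
      ultimately have "card {i\<in>N. 0 < q' i} + card {i\<in>N. q' i < h'} < card {i\<in>N. 0 < q i} + card {i\<in>N. q i < h}"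
        by linarith
      then show ?thesis using less.hyps prems' sum' by blast
    qed
    then obtain v' where v': "\<forall>M. 0 \<le> v' M" "\<forall>i\<in>N. sum v' {M\<in>Fam. i \<in> M} = q' i"
      unfolding famx by blast
    define A' where "A' = B \<union> A"
    have "card (B \<union> A) = card B + m" using AN cardA disj finA fin
      by (subst card_Un_disjoint) auto
    then have A'Fam: "A' \<in> Fam" unfolding Fam_def A'_def using AN by auto
    define v where "v = (\<lambda>M. v' M + (if M = A' then lam else 0))"
    have "sum v {M\<in>Fam. i \<in> M} = q i" if "i \<in> N" for i
    proof -
      have "sum v {M\<in>Fam. i \<in> M} = sum v' {M\<in>Fam. i \<in> M} + sum (\<lambda>M. if M = A' then lam else 0) {M\<in>Fam. i \<in> M}"
        unfolding v_def by (simp add: sum.distrib)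
      also have "sum (\<lambda>M. if M = A' then lam else 0) {M\<in>Fam. i \<in> M} = (if i \<in> A then lam else 0)"
        using finFam A'Fam that disj unfolding A'_def by (auto simp: sum.delta)
      finally show ?thesis using v'(2) that unfolding q'_def by auto
    qed
    moreover have "\<forall>M. 0 \<le> v M" using v' lampos unfolding v_def by auto
    ultimately show ?thesis unfolding famx by blast
  qed
qed

lemma expans_rep:
  assumes "F_expansible F" "prob_vec q"
  shows "F (q @ replicate t 0) = F q"
proof (induction t)
  case (Suc t)
  have pv: "prob_vec (q @ replicate t 0)" using assms(2) unfolding prob_vec_def by (auto simp: sum_list_replicate)
  have "q @ replicate (Suc t) 0 = (q @ replicate t 0) @ [0]" by (simp add: replicate_append_same[symmetric])
  moreover have "F ((q @ replicate t 0) @ [0]) = F (q @ replicate t 0)"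
    using assms(1) pv unfolding F_expansible_def by blast
  ultimately show ?case using Suc by simp
qed simp

theorem lemma2:
  fixes n k :: nat and p :: "nat \<Rightarrow> real"
  assumes "0 < k" and "k < n"
    and "(\<Sum>i=1..n. p i) = 1"
    and "\<And>i j. 1 \<le> i \<Longrightarrow> i \<le> j \<Longrightarrow> j \<le> n \<Longrightarrow> p j \<le> p i"
    and "0 < p n"
  shows "(\<exists>v. is_solution k n p v) \<and>
         (\<forall>v. is_solution k n p v \<longrightarrow>
            is_channel n (Mstar k n p) (chan k n p v) \<and>
            feasible k n (Mstar k n p) (chan k n p v) \<and>
            (\<forall>\<eta> F. gen_entropy \<eta> F \<longrightarrow>
               cond_entropy \<eta> F n p (Mstar k n p) (chan k n p v) = entropy \<eta> F (pivec k n p)))"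
proof -
  have ppos: "0 < p i" if "i \<in> {1..n}" for i using assms(4)[of i n] assms(5) that by auto
  define j where "j = jstar k n p"
  define S where "S = (\<Sum>i=j..n. p i)"
  define m where "m = k - j + 1"
  define B where "B = {1..j-1}"
  define N where "N = {j..n}"
  define Ms where "Ms = Mstar k n p"
  have pk: "p k \<le> (\<Sum>i=k..n. p i) / real (k - k + 1)"
  proof -
    have "(\<Sum>i=k..n. p i) = p k + (\<Sum>i=Suc k..n. p i)" using assms(2) by (simp add: sum.atLeast_Suc_atMost)
    moreover have "(\<Sum>i=Suc k..n. p i) \<ge> 0" using ppos by (intro sum_nonneg) (auto intro: less_imp_le)
    ultimately show ?thesis by simp
  qed
  have jP: "1 \<le> j \<and> j \<le> k \<and> p j \<le> S / real (k - j + 1)"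
    unfolding j_def S_def jstar_def
    by (rule LeastI[of "\<lambda>j. 1 \<le> j \<and> j \<le> k \<and> p j \<le> (\<Sum>i=j..n. p i) / real (k - j + 1)" k]) (use assms(1) pk in simp)
  then have j1: "1 \<le> j" and jk: "j \<le> k" and pj: "p j \<le> S / real m" unfolding m_def by auto
  have m0: "0 < m" unfolding m_def by simp
  have BN: "B \<inter> N = {}" "B \<union> N = {1..n}" "finite B" "finite N" unfolding B_def N_def using j1 jk assms(2) by auto
  have pN: "0 < p x" if "x \<in> N" for x using ppos BN(2) that by blast
  have cardB: "card B = j - 1" unfolding B_def by simp
  have cardBm: "card B + m = k" using cardB j1 jk unfolding m_def by simp
  have cardN: "card N = n - j + 1" unfolding N_def using jk assms(2) by simp
  have Spos: "0 < S" unfolding S_def using ppos j1 jk assms(2) by (intro sum_pos) auto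
  have sumBN: "sum p B + S = 1" using assms(3) BN unfolding S_def N_def[symmetric]
    by (metis sum.union_disjoint)
  have Ms_eq: "Ms = {M. M \<subseteq> B \<union> N \<and> card M = card B + m \<and> B \<subseteq> M}"
  proof -
    have "Ms = {M. M \<subseteq> {1..n} \<and> card M = k \<and> B \<subseteq> M}" unfolding Ms_def Mstar_def B_def j_def by simp
    then show ?thesis using BN(2) cardBm by simp
  qed
  have finMs: "finite Ms" unfolding Ms_eq by (rule finite_subset[of _ "Pow (B \<union> N)"]) (use BN in auto)
  have MsN: "card (M \<inter> N) = m" "M = B \<union> (M \<inter> N)" "finite M" if "M \<in> Ms" for M
  proof -
    have M: "M \<subseteq> B \<union> N" "card M = card B + m" "B \<subseteq> M" using that unfolding Ms_eq by auto
    show "M = B \<union> (M \<inter> N)" using M by auto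
    show fM: "finite M" using M(1) BN finite_subset by blast
    have "card M = card B + card (M \<inter> N)" using M BN fM
      by (subst \<open>M = B \<union> (M \<inter> N)\<close>, subst card_Un_disjoint) auto
    then show "card (M \<inter> N) = m" using M by simp
  qed
  have part1: "\<exists>v. is_solution k n p v"
  proof -
    have "\<exists>v. (\<forall>M. 0 \<le> v M) \<and> (\<forall>i\<in>N. sum v {M. M \<subseteq> B \<union> N \<and> card M = card B + m \<and> B \<subseteq> M \<and> i \<in> M} = p i)"
    proof (rule hyper[OF BN(4,3,1) m0])
      show "0 \<le> S / real m" using Spos by simp
      show "\<forall>i\<in>N. 0 \<le> p i \<and> p i \<le> S / real m"
      proof
        fix i assume i: "i \<in> N"
        then have "p i \<le> p j" using assms(4)[of j i] j1 unfolding N_def by auto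
        then show "0 \<le> p i \<and> p i \<le> S / real m" using pj ppos[of i] i j1 unfolding N_def by auto
      qed
      show "sum p N = real m * (S / real m)" using m0 unfolding S_def N_def by simp
    qed
    then obtain v where v: "\<forall>M. 0 \<le> v M" "\<forall>i\<in>N. sum v {M. M \<subseteq> B \<union> N \<and> card M = card B + m \<and> B \<subseteq> M \<and> i \<in> M} = p i"
      by blast
    have "{M \<in> Mstar k n p. i \<in> M} = {M. M \<subseteq> B \<union> N \<and> card M = card B + m \<and> B \<subseteq> M \<and> i \<in> M}" for i
      using Ms_eq unfolding Ms_def by auto
    then have "is_solution k n p v" unfolding is_solution_def using v unfolding N_def j_def by auto
    then show ?thesis by blast
  qed
  have part2: "is_channel n Ms (chan k n p v) \<and> feasible k n Ms (chan k n p v) \<and>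
            (\<forall>\<eta> F. gen_entropy \<eta> F \<longrightarrow> cond_entropy \<eta> F n p Ms (chan k n p v) = entropy \<eta> F (pivec k n p))"
    if sol: "is_solution k n p v" for v
  proof -
    have vnn: "0 \<le> v M" if "M \<in> Ms" for M using sol that unfolding is_solution_def Ms_def by auto
    have vsum: "sum v {M\<in>Ms. i \<in> M} = p i" if "i \<in> N" for i
      using sol that unfolding is_solution_def Ms_def N_def j_def by auto
    have totV: "real m * sum v Ms = S"
    proof -
      have "S = (\<Sum>i\<in>N. sum v {M\<in>Ms. i \<in> M})" unfolding S_def N_def using vsum N_def by simp
      also have "\<dots> = (\<Sum>i\<in>N. \<Sum>M\<in>Ms. if i \<in> M then v M else 0)"
        using finMs by (simp add: sum.inter_filter)
      also have "\<dots> = (\<Sum>M\<in>Ms. \<Sum>i\<in>N. if i \<in> M then v M else 0)" by (rule sum.swap)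
      also have "\<dots> = (\<Sum>M\<in>Ms. v M * real m)"
      proof (rule sum.cong)
        fix M assume "M \<in> Ms"
        have "(\<Sum>i\<in>N. if i \<in> M then v M else 0) = (\<Sum>i\<in>{i\<in>N. i\<in>M}. v M)"
          using BN(4) by (simp only: sum.inter_filter)
        also have "{i\<in>N. i\<in>M} = M \<inter> N" by auto
        finally show "(\<Sum>i\<in>N. if i \<in> M then v M else 0) = v M * real m" using MsN[OF \<open>M \<in> Ms\<close>] by simp
      qed simp
      finally show ?thesis by (simp add: sum_distrib_left mult.commute)
    qed
    have chan_lo: "chan k n p v x M = v M * real m / S" if "x \<in> B" for x M
      using that unfolding chan_def B_def m_def S_def j_def by auto
    have chan_hi: "chan k n p v x M = (if x \<in> M then v M / p x else 0)" if "x \<in> N" for x M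
      using that unfolding chan_def B_def N_def m_def S_def j_def by auto
    have chan_out: "chan k n p v x M = 0" if "x \<notin> B" "x \<notin> N" for x M
      using that unfolding chan_def B_def N_def m_def S_def j_def by auto
    have ch: "is_channel n Ms (chan k n p v)"
      unfolding is_channel_def
    proof
      fix x assume x: "x \<in> {1..n}"
      then consider "x \<in> B" | "x \<in> N" using BN(2) by blast
      then show "(\<forall>y\<in>Ms. 0 \<le> chan k n p v x y) \<and> (\<Sum>y\<in>Ms. chan k n p v x y) = 1"
      proof cases
        case 1
        have "(\<Sum>y\<in>Ms. chan k n p v x y) = (\<Sum>y\<in>Ms. v y) * real m / S"
          using chan_lo[OF 1] by (simp add: sum_divide_distrib sum_distrib_right)
        also have "\<dots> = 1" using totV Spos by (simp add: mult.commute)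
        finally show ?thesis using chan_lo[OF 1] vnn Spos by auto
      next
        case 2
        have "(\<Sum>y\<in>Ms. chan k n p v x y) = (\<Sum>y\<in>Ms. if x \<in> y then v y / p x else 0)"
          using chan_hi[OF 2] by simp
        also have "\<dots> = (\<Sum>y\<in>{y\<in>Ms. x \<in> y}. v y) / p x"
          using finMs by (simp add: sum.inter_filter sum_divide_distrib) (rule sum.cong, auto)
        also have "\<dots> = 1" using vsum[OF 2] ppos[OF x] by simp
        finally show ?thesis using chan_hi[OF 2] vnn ppos[OF x] by auto
      qed
    qed
    have fe: "feasible k n Ms (chan k n p v)"
      unfolding feasible_def
    proof
      fix M assume M: "M \<in> Ms"
      have "{x\<in>{1..n}. chan k n p v x M > 0} \<subseteq> M"
      proof
        fix x assume "x \<in> {x\<in>{1..n}. chan k n p v x M > 0}"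
        then have x: "x \<in> {1..n}" "chan k n p v x M > 0" by auto
        then consider "x \<in> B" | "x \<in> N" using BN(2) by blast
        then show "x \<in> M"
        proof cases
          case 1 then show ?thesis using MsN(2)[OF M] by blast
        next
          case 2 then show ?thesis using chan_hi[OF 2, of M] x(2) by (auto split: if_splits)
        qed
      qed
      then have "card {x\<in>{1..n}. chan k n p v x M > 0} \<le> card M" using MsN(3)[OF M] by (rule card_mono[rotated])
      then show "card {x\<in>{1..n}. chan k n p v x M > 0} \<le> k" using M unfolding Ms_eq cardBm by auto
    qed
    have outp: "out_prob n p (chan k n p v) M = v M * real m / S" if M: "M \<in> Ms" for M
    proof -
      have "out_prob n p (chan k n p v) M = (\<Sum>x\<in>B. p x * chan k n p v x M) + (\<Sum>x\<in>N. p x * chan k n p v x M)"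
        unfolding out_prob_def using BN by (metis sum.union_disjoint)
      also have "(\<Sum>x\<in>B. p x * chan k n p v x M) = sum p B * (v M * real m / S)"
        using chan_lo by (simp add: sum_distrib_right sum_divide_distrib)
      also have "(\<Sum>x\<in>N. p x * chan k n p v x M) = (\<Sum>x\<in>N. if x \<in> M then v M else 0)"
      proof (rule sum.cong[OF refl])
        fix x assume "x \<in> N"
        then show "p x * chan k n p v x M = (if x \<in> M then v M else 0)"
          using pN[of x] chan_hi[of x M] by auto
      qed
      also have "\<dots> = v M * real m"
      proof -
        have "(\<Sum>x\<in>N. if x \<in> M then v M else 0) = (\<Sum>i\<in>{i\<in>N. i\<in>M}. v M)"
          using BN(4) by (simp only: sum.inter_filter)
        also have "{i\<in>N. i\<in>M} = M \<inter> N" by auto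
        finally show ?thesis using MsN[OF M] by simp
      qed
      also have "sum p B * (v M * real m / S) + v M * real m = (sum p B + S) * (v M * real m / S)"
        using Spos by (simp add: field_simps)
      finally show ?thesis using sumBN by simp
    qed

    define P where "P = pivec k n p"
    define f where "f = (\<lambda>l. if l \<le> j - 1 then p l else S / real m)"
    have Pdef: "P = map f [1..<Suc k]" unfolding P_def pivec_def f_def j_def S_def m_def by simp
    have Bk: "{1..k} = B \<union> {j..k}" "B \<inter> {j..k} = {}" unfolding B_def using j1 jk by auto
    have pvP: "prob_vec P"
    proof -
      have "\<forall>x\<in>set P. 0 \<le> x" unfolding Pdef f_def using ppos assms(2) Spos by (auto intro: less_imp_le)
      moreover have "sum_list P = 1"
      proof -
        have "sum_list P = sum f {1..k}" unfolding Pdef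
          by (simp only: sum_set_upt_conv_sum_list_nat[symmetric] set_upt atLeastLessThanSuc_atLeastAtMost)
        also have "\<dots> = sum f B + sum f {j..k}" unfolding Bk(1) using Bk(2) BN(3) by (simp add: sum.union_disjoint)
        also have "sum f B = sum p B" unfolding f_def B_def by simp
        also have "sum f {j..k} = (\<Sum>l\<in>{j..k}. S / real m)" using j1 by (intro sum.cong) (auto simp: f_def)
        also have "\<dots> = real m * (S / real m)" using jk by (simp add: m_def Suc_diff_le)
        finally show ?thesis using sumBN m0 by simp
      qed
      ultimately show ?thesis unfolding prob_vec_def by simp
    qed
    have msetP: "mset P = image_mset p (mset_set B) + replicate_mset m (S / real m)"
    proof -
      have "mset P = image_mset f (mset_set {1..k})" unfolding Pdef
        by (simp only: mset_map mset_upt atLeastLessThanSuc_atLeastAtMost)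
      also have "\<dots> = image_mset f (mset_set B) + image_mset f (mset_set {j..k})"
        unfolding Bk(1) using Bk(2) BN(3) by (simp add: mset_set_Union)
      also have "image_mset f (mset_set B) = image_mset p (mset_set B)"
        using BN(3) by (intro image_mset_cong) (auto simp: f_def B_def)
      also have "image_mset f (mset_set {j..k}) = image_mset (\<lambda>_. S / real m) (mset_set {j..k})"
        using j1 by (intro image_mset_cong) (auto simp: f_def)
      also have "\<dots> = replicate_mset m (S / real m)" using jk by (simp add: image_mset_const_eq m_def Suc_diff_le)
      finally show ?thesis .
    qed
    have postF: "F (posterior n p (chan k n p v) M) = F P"
      if M: "M \<in> Ms" and vM: "0 < v M" and sym: "F_symmetric F" and exs: "F_expansible F" for M F
    proof -
      define g where "g = (\<lambda>x. if x \<in> B then p x else if x \<in> M then S / real m else 0)"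
      have o: "out_prob n p (chan k n p v) M = v M * real m / S" using outp[OF M] .
      have post: "posterior n p (chan k n p v) M = map g [1..<Suc n]"
        unfolding posterior_def
      proof (rule map_cong[OF refl])
        fix x assume "x \<in> set [1..<Suc n]"
        then have x: "x \<in> {1..n}" by auto
        then consider "x \<in> B" | "x \<in> N" using BN(2) by blast
        then show "p x * chan k n p v x M / out_prob n p (chan k n p v) M = g x"
        proof cases
          case 1 then show ?thesis unfolding o chan_lo[OF 1] g_def using vM Spos m0 by simp
        next
          case 2
          have "x \<notin> B" using 2 BN by auto
          then show ?thesis unfolding o chan_hi[OF 2] g_def using vM Spos m0 ppos[OF x] by auto
        qed
      qed
      have U: "{1..n} = B \<union> ((M \<inter> N) \<union> (N - M))" using BN by auto
      have cNM: "card (N - M) = n - k"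
      proof -
        have "card (N - M) = card N - card (M \<inter> N)" using BN(4)
          by (metis Int_commute card_Diff_subset_Int finite_Int)
        then show ?thesis using cardN MsN(1)[OF M] m_def jk by simp
      qed
      have "mset (map g [1..<Suc n]) = image_mset g (mset_set {1..n})"
        by (simp only: mset_map mset_upt atLeastLessThanSuc_atLeastAtMost)
      also have "\<dots> = image_mset g (mset_set B) + (image_mset g (mset_set (M \<inter> N)) + image_mset g (mset_set (N - M)))"
      proof -
        have d1: "mset_set ((M \<inter> N) \<union> (N - M)) = mset_set (M \<inter> N) + mset_set (N - M)"
          using BN(4) by (intro mset_set_Union) auto
        have d2: "mset_set (B \<union> ((M \<inter> N) \<union> (N - M))) = mset_set B + mset_set ((M \<inter> N) \<union> (N - M))"
          using BN(1,3,4) by (intro mset_set_Union) auto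
        show ?thesis unfolding U d2 d1 image_mset_union by (rule refl)
      qed
      also have "image_mset g (mset_set B) = image_mset p (mset_set B)"
        using BN(3) by (intro image_mset_cong) (auto simp: g_def)
      also have "image_mset g (mset_set (M \<inter> N)) = image_mset (\<lambda>_. S / real m) (mset_set (M \<inter> N))"
        using BN by (intro image_mset_cong) (auto simp: g_def)
      also have "\<dots> = replicate_mset m (S / real m)" using MsN(1)[OF M] by (simp add: image_mset_const_eq)
      also have "image_mset g (mset_set (N - M)) = image_mset (\<lambda>_. 0) (mset_set (N - M))"
        using BN by (intro image_mset_cong) (auto simp: g_def)
      also have "\<dots> = replicate_mset (n - k) 0" using cNM by (simp add: image_mset_const_eq)
      finally have X: "mset (map g [1..<Suc n]) = image_mset p (mset_set B) + (replicate_mset m (S / real m) + replicate_mset (n - k) 0)" .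
      have "mset (posterior n p (chan k n p v) M) = mset (P @ replicate (n - k) 0)"
        unfolding post mset_append msetP mset_replicate X by (simp only: add.assoc)
      moreover have "prob_vec (P @ replicate (n - k) 0)" using pvP unfolding prob_vec_def by (auto simp: sum_list_replicate)
      ultimately have "F (posterior n p (chan k n p v) M) = F (P @ replicate (n - k) 0)"
        using sym unfolding F_symmetric_def by blast
      also have "\<dots> = F P" by (rule expans_rep[OF exs pvP])
      finally show ?thesis .
    qed
    have ent: "cond_entropy \<eta> F n p Ms (chan k n p v) = entropy \<eta> F P" if ge: "gen_entropy \<eta> F" for \<eta> F
    proof -
      have sym: "F_symmetric F" and exs: "F_expansible F" using ge unfolding gen_entropy_def by auto
      let ?o = "out_prob n p (chan k n p v)"
      have opos: "?o M > 0 \<longleftrightarrow> v M > 0" if "M \<in> Ms" for M using outp[OF that] Spos m0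
        by (simp add: zero_less_mult_iff zero_less_divide_iff)
      have "(\<Sum>y\<in>{y\<in>Ms. ?o y > 0}. ?o y * F (posterior n p (chan k n p v) y)) = (\<Sum>y\<in>{y\<in>Ms. ?o y > 0}. ?o y * F P)"
        using postF sym exs opos by (intro sum.cong) auto
      also have "\<dots> = (\<Sum>y\<in>{y\<in>Ms. ?o y > 0}. ?o y) * F P" by (simp add: sum_distrib_right)
      also have "(\<Sum>y\<in>{y\<in>Ms. ?o y > 0}. ?o y) = (\<Sum>y\<in>Ms. ?o y)"
      proof (rule sum.mono_neutral_left[OF finMs])
        show "\<forall>i\<in>Ms - {y \<in> Ms. 0 < ?o y}. ?o i = 0"
        proof
          fix M assume "M \<in> Ms - {y \<in> Ms. 0 < ?o y}"
          then have M: "M \<in> Ms" "\<not> 0 < ?o M" by auto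
          have "0 \<le> ?o M" unfolding outp[OF M(1)] using vnn[OF M(1)] Spos by simp
          then show "?o M = 0" using M(2) by simp
        qed
      qed auto
      also have "\<dots> = (\<Sum>y\<in>Ms. v y) * real m / S" using outp by (simp add: sum_divide_distrib sum_distrib_right)
      also have "\<dots> = 1" using totV Spos by (simp add: mult.commute)
      finally show ?thesis unfolding cond_entropy_def entropy_def by simp
    qed
    show ?thesis using ch fe ent unfolding P_def by blast
  qed
  show ?thesis using part1 part2 unfolding Ms_def by blast
qed

end
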